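(* Fix $0<\varepsilon<\frac1{10}$. Let $n$ be a positive integer, $m=\lceil n/\log^8 n\rceil$, and let $\pi_R,\pi_B:[n]\to[m]$ be independent uniformly random functions. Let $s=\lceil\varepsilon n\rceil$ and let $\mathcal E(\varepsilon)$ be the event that for every $s$-pairing $P$ in $[n]$, at least one of $\pi_R,\pi_B$ is $\varepsilon$-respectful of $P$. Then $\mathcal E(\varepsilon)$ holds with probability tending to $1$ as $n\to\infty$.
   Context: Logarithms are natural. An $s$-pairing in $[n]$ is a collection $\{(u_1,v_1),\dots,(u_s,v_s)\}$ of pairs where $u_1,\dots,u_s,v_1,\dots,v_s$ are distinct elements of $[n]$. A map $\pi:[n]\to[m]$ is $\varepsilon$-respectful of such a pairing if there is $I\subseteq[s]$ with $|I|\geq\varepsilon s$ such that $\pi(u_i)\neq\pi(v_i)$ for all $i\in I$ and the unordered pairs $\{\pi(u_i),\pi(v_i)\}$, $i\in I$, are pairwise distinct. *)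

theory Defs
  imports "HOL-Probability.Probability"
begin

definition is_pairing :: "nat \<Rightarrow> nat \<Rightarrow> (nat \<times> nat) list \<Rightarrow> bool" where
  "is_pairing n s ps \<longleftrightarrow> length ps = s \<and> distinct (map fst ps @ map snd ps)
     \<and> set (map fst ps @ map snd ps) \<subseteq> {1..n}"

definition respectful :: "real \<Rightarrow> (nat \<Rightarrow> nat) \<Rightarrow> (nat \<times> nat) list \<Rightarrow> bool" where
  "respectful eps f ps \<longleftrightarrow>
     (\<exists>I \<subseteq> {..<length ps}. real (card I) \<ge> eps * real (length ps)
        \<and> (\<forall>i\<in>I. f (fst (ps ! i)) \<noteq> f (snd (ps ! i)))
        \<and> inj_on (\<lambda>i. {f (fst (ps ! i)), f (snd (ps ! i))}) I)"

definition m_of :: "nat \<Rightarrow> nat" where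
  "m_of n = nat \<lceil>real n / (ln (real n)) ^ 8\<rceil>"

definition s_of :: "real \<Rightarrow> nat \<Rightarrow> nat" where
  "s_of eps n = nat \<lceil>eps * real n\<rceil>"

definition event_E :: "real \<Rightarrow> nat \<Rightarrow> (nat \<Rightarrow> nat) \<times> (nat \<Rightarrow> nat) \<Rightarrow> bool" where
  "event_E eps n pp \<longleftrightarrow> (\<forall>ps. is_pairing n (s_of eps n) ps \<longrightarrow>
       respectful eps (fst pp) ps \<or> respectful eps (snd pp) ps)"

definition two_maps :: "nat \<Rightarrow> ((nat \<Rightarrow> nat) \<times> (nat \<Rightarrow> nat)) pmf" where
  "two_maps n = pmf_of_set (({1..n} \<rightarrow>\<^sub>E {1..m_of n}) \<times> ({1..n} \<rightarrow>\<^sub>E {1..m_of n}))"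

end

theory Submission
  imports Defs "HOL-Real_Asymp.Real_Asymp"
begin


definition pts :: "(nat \<times> nat) set \<Rightarrow> nat set" where
  "pts S = fst ` S \<union> snd ` S"

definition Fset :: "nat set \<Rightarrow> nat set \<Rightarrow> (nat \<times> nat) set \<Rightarrow> (nat \<times> nat) set \<Rightarrow> (nat \<Rightarrow> nat) set" where
  "Fset D M S Z = {f \<in> PiE D (\<lambda>_. M). \<forall>p\<in>S. (f (fst p), f (snd p)) \<in> Z}"

lemma card_Fset:
  assumes "finite D" "finite M" "finite S" "finite Z" "pts S \<subseteq> D"
  shows "card (Fset D M S Z) \<le> card Z ^ card S * card M ^ card (D - pts S)"
proof -
  define h where "h f = (restrict (\<lambda>p. (f (fst p), f (snd p))) S, restrict f (D - pts S))" for f :: "nat \<Rightarrow> nat"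
  have sub: "h ` Fset D M S Z \<subseteq> (S \<rightarrow>\<^sub>E Z) \<times> (PiE (D - pts S) (\<lambda>_. M))"
    by (auto simp: h_def Fset_def PiE_iff extensional_def split: if_splits)
  have inj: "inj_on h (Fset D M S Z)"
  proof
    fix f g assume f: "f \<in> Fset D M S Z" and g: "g \<in> Fset D M S Z" and e: "h f = h g"
    show "f = g"
    proof
      fix x
      show "f x = g x"
      proof (cases "x \<in> D")
        case False then show ?thesis using f g by (auto simp: Fset_def PiE_iff extensional_def)
      next
        case True
        show ?thesis
        proof (cases "x \<in> pts S")
          case False
          then have "restrict f (D - pts S) x = restrict g (D - pts S) x" using e by (simp add: h_def)
          then show ?thesis using True False by simp
        next
          case xp: True
          then obtain p where p: "p \<in> S" "x = fst p \<or> x = snd p" by (auto simp: pts_def)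
          have "restrict (\<lambda>p. (f (fst p), f (snd p))) S p = restrict (\<lambda>p. (g (fst p), g (snd p))) S p"
            using e by (simp add: h_def)
          then show ?thesis using p by auto
        qed
      qed
    qed
  qed
  have fin: "finite ((S \<rightarrow>\<^sub>E Z) \<times> (PiE (D - pts S) (\<lambda>_. M)))"
    using assms by (auto intro!: finite_PiE)
  have "card (Fset D M S Z) \<le> card ((S \<rightarrow>\<^sub>E Z) \<times> (PiE (D - pts S) (\<lambda>_. M)))"
    using card_inj_on_le[OF inj sub fin] .
  also have "\<dots> = card Z ^ card S * card M ^ card (D - pts S)"
    using assms by (simp add: card_cartesian_product card_PiE)
  finally show ?thesis .
qed



definition cls :: "(nat \<Rightarrow> nat) \<Rightarrow> (nat \<times> nat) set \<Rightarrow> nat set set" where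
  "cls f S = (\<lambda>p. {f (fst p), f (snd p)}) ` {p \<in> S. f (fst p) \<noteq> f (snd p)}"

lemma resp_of_card:
  assumes "real (card (cls f (set ps))) \<ge> eps * real (length ps)"
  shows "respectful eps f ps"
proof -
  define c where "c i = {f (fst (ps ! i)), f (snd (ps ! i))}" for i
  define G where "G = {i. i < length ps \<and> f (fst (ps ! i)) \<noteq> f (snd (ps ! i))}"
  have cG: "cls f (set ps) = c ` G"
    by (auto simp: cls_def c_def G_def in_set_conv_nth image_iff) (metis fst_conv snd_conv)
  define I where "I = inv_into G c ` (c ` G)"
  have IG: "I \<subseteq> G" unfolding I_def by (auto intro: inv_into_into)
  have injI: "inj_on c I" unfolding I_def
    by (smt (verit, best) f_inv_into_f imageE inj_onI)
  have "card I = card (c ` G)" unfolding I_def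
    by (rule card_image) (rule inj_on_inv_into, simp)
  then have "real (card I) \<ge> eps * real (length ps)" using assms cG by simp
  moreover have "I \<subseteq> {..<length ps}" using IG by (auto simp: G_def)
  moreover have "\<forall>i\<in>I. f (fst (ps ! i)) \<noteq> f (snd (ps ! i))" using IG by (auto simp: G_def)
  moreover have "inj_on (\<lambda>i. {f (fst (ps ! i)), f (snd (ps ! i))}) I"
    using injI by (simp add: c_def[abs_def])
  ultimately show ?thesis unfolding respectful_def by blast
qed



definition Zof :: "nat set \<Rightarrow> nat set set \<Rightarrow> (nat \<times> nat) set" where
  "Zof M C = {p \<in> M \<times> M. fst p = snd p \<or> {fst p, snd p} \<in> C}"

lemma card_Zof:
  assumes "finite M" "finite C" "\<forall>c\<in>C. \<exists>x y. c = {x, y}"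
  shows "card (Zof M C) \<le> card M + 2 * card C"
proof -
  have sub: "Zof M C \<subseteq> (\<lambda>a. (a, a)) ` M \<union> (\<Union>c\<in>C. {p. {fst p, snd p} = c})"
  proof
    fix p assume p: "p \<in> Zof M C"
    show "p \<in> (\<lambda>a. (a, a)) ` M \<union> (\<Union>c\<in>C. {p. {fst p, snd p} = c})"
    proof (cases "fst p = snd p")
      case True
      then have "p = (\<lambda>a. (a, a)) (fst p)" by (metis prod.collapse)
      moreover have "fst p \<in> M" using p unfolding Zof_def by (simp add: mem_Times_iff)
      ultimately show ?thesis by blast
    next
      case False
      then have "{fst p, snd p} \<in> C" using p by (simp add: Zof_def)
      then show ?thesis by blast
    qed
  qed
  have two: "card {p. {fst p, snd p} = c} \<le> 2" if cC: "c \<in> C" for c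
  proof -
    obtain x y where c: "c = {x, y}" using bspec[OF assms(3) cC] by (elim exE)
    have "{p. {fst p, snd p} = c} \<subseteq> {(x, y), (y, x)}"
    proof
      fix p :: "nat\<times>nat" assume "p \<in> {p. {fst p, snd p} = c}"
      then have "{fst p, snd p} = {x,y}" by (simp add: c)
      then have "(fst p = x \<and> snd p = y) \<or> (fst p = y \<and> snd p = x)" by (simp add: doubleton_eq_iff)
      then show "p \<in> {(x, y), (y, x)}" by (cases p) auto
    qed
    then have "card {p. {fst p, snd p} = c} \<le> card {(x, y), (y, x)}"
      by (rule card_mono[rotated]) simp
    also have "\<dots> \<le> 2" by (rule card_insert_le_m1) simp_all
    finally show ?thesis .
  qed
  have fin2: "finite {p. {fst p, snd p} = c}" if cC: "c \<in> C" for c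
  proof -
    obtain x y where c: "c = {x, y}" using bspec[OF assms(3) cC] by (elim exE)
    have "{p. {fst p, snd p} = c} \<subseteq> {(x, y), (y, x)}"
    proof
      fix p :: "nat\<times>nat" assume "p \<in> {p. {fst p, snd p} = c}"
      then have "{fst p, snd p} = {x,y}" by (simp add: c)
      then have "(fst p = x \<and> snd p = y) \<or> (fst p = y \<and> snd p = x)" by (simp add: doubleton_eq_iff)
      then show "p \<in> {(x, y), (y, x)}" by (cases p) auto
    qed
    then show ?thesis by (rule finite_subset) simp
  qed
  have "card (Zof M C) \<le> card ((\<lambda>a. (a, a)) ` M \<union> (\<Union>c\<in>C. {p. {fst p, snd p} = c}))"
  proof (rule card_mono[OF _ sub])
    have "finite (\<Union>c\<in>C. {p. {fst p, snd p} = c})"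
      using assms(2) fin2 by (rule finite_UN_I)
    then show "finite ((\<lambda>a. (a, a)) ` M \<union> (\<Union>c\<in>C. {p. {fst p, snd p} = c}))"
      using assms(1) by blast
  qed
  also have "\<dots> \<le> card ((\<lambda>a. (a, a)) ` M) + card (\<Union>c\<in>C. {p. {fst p, snd p} = c})"
    by (rule card_Un_le)
  also have "\<dots> \<le> card M + (\<Sum>c\<in>C. card {p. {fst p, snd p} = c})"
    using assms by (intro add_mono card_image_le card_UN_le)
  also have "\<dots> \<le> card M + (\<Sum>c\<in>C. 2)"
    using two by (intro add_mono sum_mono) simp_all
  finally show ?thesis by simp
qed


lemma card_Sfam:
  assumes "finite U"
  shows "real (card {S. S \<subseteq> U \<and> card S = s \<and> P S}) \<le> real (card U) ^ s / fact s"
proof -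
  have "card {S. S \<subseteq> U \<and> card S = s \<and> P S} \<le> card {S. S \<subseteq> U \<and> card S = s}"
  proof (rule card_mono)
    show "finite {S. S \<subseteq> U \<and> card S = s}" using assms by simp
  qed auto
  also have "\<dots> = card U choose s" using n_subsets[OF assms] .
  finally have 1: "real (card {S. S \<subseteq> U \<and> card S = s \<and> P S}) \<le> real (card U choose s)"
    by linarith
  have 2: "real (card U choose s) * fact s \<le> real (card U) ^ s"
  proof -
    have "real ((card U choose s) * fact s) \<le> real (card U ^ s)"
      using binomial_fact_pow[of "card U" s] by (simp only: of_nat_le_iff)
    then show ?thesis by simp
  qed
  have "real (card U choose s) \<le> real (card U) ^ s / fact s"
    using 2 by (simp add: field_simps)
  with 1 show ?thesis by linarith
qed

lemma card_Zfam:
  assumes "finite U" "card U \<ge> 1"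
  shows "card {Z. Z \<subseteq> U \<and> card Z \<le> k} \<le> (k + 1) * card U ^ k"
proof -
  have eq: "{Z. Z \<subseteq> U \<and> card Z \<le> k} = (\<Union>j\<in>{..k}. {Z. Z \<subseteq> U \<and> card Z = j})" by auto
  have "card {Z. Z \<subseteq> U \<and> card Z \<le> k} \<le> (\<Sum>j\<in>{..k}. card {Z. Z \<subseteq> U \<and> card Z = j})"
    unfolding eq by (rule card_UN_le) auto
  also have "\<dots> \<le> (\<Sum>j\<in>{..k}. card U ^ k)"
  proof (intro sum_mono)
    fix j assume "j \<in> {..k}"
    then have jk: "j \<le> k" by simp
    have "card {Z. Z \<subseteq> U \<and> card Z = j} = card U choose j" using n_subsets[OF assms(1)] .
    also have "\<dots> \<le> card U ^ j"
      by (cases "j \<le> card U") (auto simp: binomial_le_pow binomial_eq_0)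
    also have "\<dots> \<le> card U ^ k" using assms(2) jk by (intro power_increasing) auto
    finally show "card {Z. Z \<subseteq> U \<and> card Z = j} \<le> card U ^ k" .
  qed
  finally show ?thesis by simp
qed

lemma pow_div_fact_le_exp:
  fixes x :: real assumes "x \<ge> 0"
  shows "x ^ s / fact s \<le> exp x"
proof -
  have "(\<Sum>n\<in>{s}. x ^ n / fact n) \<le> (\<Sum>n. x ^ n / fact n)"
    using summable_exp_generic[of x] assms
    by (intro sum_le_suminf) (auto simp: divide_inverse ac_simps)
  also have "\<dots> = exp x" by (simp add: exp_def divide_inverse ac_simps)
  finally show ?thesis by simp
qed



lemma det_bound:
  fixes x eps L :: real and m s k :: nat
  assumes eps: "0 < eps" "eps < 1/10"
    and x2: "x \<ge> 2" and L: "L = ln x"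
    and hm1: "x / L^8 \<le> m" and hm2: "m \<le> 2 * x / L^8" and m1: "m \<ge> 1"
    and hs1: "eps * x \<le> s" and hs2: "s \<le> x"
    and hk: "k \<le> m + 2 * eps * s" and k1: "k \<ge> 1"
    and hmk: "m \<le> 0.8 * eps * x"
    and hL: "1 + 25.6 * ln L \<le> L / 10"
    and hbig: "5 + 4 * (2 * x / L^8) \<le> 0.1 * eps * x"
  shows "(real k + 1)^2 * real m ^ (4*k) * (exp 1 * x^2 * real k^2 / (real s * real m^4)) ^ s \<le> 1 / x"
proof -
  have Lpos: "L > 0" using L x2 by simp
  have xpos: "x > 0" using x2 by simp
  have s1: "real s \<ge> 1"
  proof -
    have "real m \<le> 0.8 * eps * x" by (rule hmk)
    also have "\<dots> \<le> eps * x" using eps xpos by simp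
    finally show ?thesis using m1 hs1 by linarith
  qed
  have mpos: "real m > 0" using m1 by simp
  have kpos: "real k > 0" using k1 by simp
  have ks: "real k \<le> real s"
  proof -
    have "0.8 * (eps * x) \<le> 0.8 * real s" using hs1 by simp
    then have "real m \<le> 0.8 * real s" using hmk by (simp add: mult.assoc)
    moreover have "2 * eps * real s \<le> 0.2 * real s" using eps s1 by (intro mult_right_mono) auto
    ultimately show ?thesis using hk by linarith
  qed
  define Q where "Q = exp 1 * x^2 * real k^2 / (real s * real m^4)"
  have Qpos: "Q > 0" unfolding Q_def using xpos kpos s1 mpos by (intro divide_pos_pos mult_pos_pos) auto
  have lnQ: "ln Q = 1 + 2 * ln x + 2 * ln (real k) - ln (real s) - 4 * ln (real m)"
    unfolding Q_def using xpos kpos s1 mpos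
    by (simp add: ln_div ln_mult ln_realpow)
  define LHS where "LHS = (real k + 1)^2 * real m ^ (4*k) * Q ^ s"
  have LHSpos: "LHS > 0" unfolding LHS_def using Qpos mpos kpos by simp
  have lnLHS: "ln LHS = 2 * ln (real k + 1) + real (4*k) * ln (real m) + real s * ln Q"
    unfolding LHS_def using Qpos mpos kpos by (simp add: ln_mult ln_realpow)
  have lnx: "ln x = L" using L by simp
  have lk1: "ln (real k + 1) \<le> 2 * L"
  proof -
    have "2 * x \<le> x * x" using x2 by (intro mult_right_mono) auto
    then have "real k + 1 \<le> x * x" using ks hs2 x2 by linarith
    then have "real k + 1 \<le> x^2" by (simp add: power2_eq_square)
    then have "ln (real k + 1) \<le> ln (x^2)" using kpos by (subst ln_le_cancel_iff) auto
    also have "\<dots> = 2 * L" using xpos L by (simp add: ln_realpow)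
    finally show ?thesis .
  qed
  have lks: "ln (real k) \<le> ln (real s)" using ks kpos by simp
  have lsx: "ln (real s) \<le> L" using hs2 s1 L by simp
  have lm_lo: "ln (real m) \<ge> L - 8 * ln L"
  proof -
    have "ln (x / L^8) \<le> ln (real m)" using hm1 xpos Lpos mpos by (subst ln_le_cancel_iff) auto
    moreover have "ln (x / L^8) = L - 8 * ln L" using xpos Lpos L by (simp add: ln_div ln_realpow)
    ultimately show ?thesis by simp
  qed
  have lm0: "ln (real m) \<ge> 0" using m1 by simp
  have lmx: "ln (real m) \<le> L"
  proof -
    have "0.8 * eps * x \<le> 1 * x" using eps xpos by (intro mult_right_mono) auto
    then have "real m \<le> x" using hmk by linarith
    then show ?thesis using mpos L by simp
  qed
  have t2: "real (4*k) * ln (real m) \<le> 4 * real m * L + 0.8 * real s * ln (real m)"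
  proof -
    have "real (4*k) * ln (real m) \<le> (4 * real m + 8 * eps * real s) * ln (real m)"
      using hk lm0 by (intro mult_right_mono) auto
    also have "\<dots> = 4 * real m * ln (real m) + (8 * eps) * (real s * ln (real m))" by (simp add: algebra_simps)
    also have "\<dots> \<le> 4 * real m * L + 0.8 * (real s * ln (real m))"
    proof (rule add_mono)
      show "4 * real m * ln (real m) \<le> 4 * real m * L" using lmx mpos by simp
      have "0 \<le> real s * ln (real m)" using lm0 s1 by simp
      then show "(8 * eps) * (real s * ln (real m)) \<le> 0.8 * (real s * ln (real m))"
        using eps by (intro mult_right_mono) auto
    qed
    finally show ?thesis by simp
  qed
  have brk: "1 + 3 * L - 3.2 * ln (real m) \<le> - L / 10" using lm_lo hL by linarith
  have t3: "real s * ln Q + 0.8 * real s * ln (real m) \<le> real s * (1 + 3 * L - 3.2 * ln (real m))"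
  proof -
    have "ln Q + 0.8 * ln (real m) \<le> 1 + 3 * L - 3.2 * ln (real m)"
      using lnQ lnx lks lsx by linarith
    then have "real s * (ln Q + 0.8 * ln (real m)) \<le> real s * (1 + 3 * L - 3.2 * ln (real m))"
      using s1 by (intro mult_left_mono) auto
    then show ?thesis by (simp add: algebra_simps)
  qed
  have t4: "real s * (1 + 3 * L - 3.2 * ln (real m)) \<le> real s * (- L / 10)"
    using brk s1 by (intro mult_left_mono) auto
  have t5: "real s * (- L / 10) \<le> (eps * x) * (- L / 10)"
    using hs1 Lpos by (intro mult_right_mono_neg) auto
  have "ln LHS \<le> 4 * L + 4 * real m * L + (eps * x) * (- L / 10)"
    using lnLHS lk1 t2 t3 t4 t5 by linarith
  also have "\<dots> = L * (4 + 4 * real m - 0.1 * eps * x)" by (simp add: algebra_simps)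
  also have "\<dots> \<le> L * (-1)"
    using hbig hm2 Lpos by (intro mult_left_mono) auto
  finally have "ln LHS \<le> ln (1 / x)" using lnx xpos by (simp add: ln_div)
  then have "LHS \<le> 1 / x" using LHSpos xpos by (subst (asm) ln_le_cancel_iff) auto
  then show ?thesis unfolding LHS_def Q_def .
qed

lemma pairing_facts:
  assumes "is_pairing n s ps"
  shows "set ps \<subseteq> {1..n} \<times> {1..n}" "card (set ps) = s" "card (pts (set ps)) = 2 * s"
proof -
  have d: "distinct (map fst ps @ map snd ps)" and sub: "set (map fst ps @ map snd ps) \<subseteq> {1..n}"
    and l: "length ps = s" using assms by (auto simp: is_pairing_def)
  show "set ps \<subseteq> {1..n} \<times> {1..n}"
  proof
    fix p assume "p \<in> set ps"
    then have "fst p \<in> {1..n}" "snd p \<in> {1..n}" using sub by auto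
    then show "p \<in> {1..n} \<times> {1..n}" by (simp add: mem_Times_iff)
  qed
  have "distinct (map fst ps)" using d by simp
  then have "distinct ps" by (simp add: distinct_map)
  then show "card (set ps) = s" using l by (simp add: distinct_card)
  have "pts (set ps) = set (map fst ps @ map snd ps)" by (simp add: pts_def)
  moreover have "card (set (map fst ps @ map snd ps)) = length (map fst ps @ map snd ps)"
    by (rule distinct_card[OF d])
  ultimately show "card (pts (set ps)) = 2 * s" using l by simp
qed

lemma card_UN_bound:
  assumes "finite I" "\<And>i. i \<in> I \<Longrightarrow> card (A i) \<le> K"
  shows "card (\<Union>i\<in>I. A i) \<le> card I * K"
proof -
  have "card (\<Union>i\<in>I. A i) \<le> (\<Sum>i\<in>I. card (A i))" using card_UN_le[OF assms(1)] .
  also have "\<dots> \<le> card I * K" using sum_bounded_above[of I "\<lambda>i. card (A i)" K] assms(2) by simp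
  finally show ?thesis .
qed

lemma in_Fset:
  assumes "f \<in> PiE D (\<lambda>_. M)" "pts S \<subseteq> D"
  shows "f \<in> Fset D M S (Zof M (cls f S))"
  unfolding Fset_def
proof (intro CollectI conjI ballI)
  show "f \<in> PiE D (\<lambda>_. M)" by fact
  fix p assume p: "p \<in> S"
  have "fst p \<in> D" "snd p \<in> D" using p assms(2) by (auto simp: pts_def)
  then have "f (fst p) \<in> M" "f (snd p) \<in> M" using assms(1) by auto
  moreover have "f (fst p) = f (snd p) \<or> {f (fst p), f (snd p)} \<in> cls f S"
    using p by (auto simp: cls_def)
  ultimately show "(f (fst p), f (snd p)) \<in> Zof M (cls f S)" by (simp add: Zof_def)
qed

lemma card_cls_le:
  assumes "is_pairing n s ps" "\<not> respectful eps f ps"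
  shows "card (cls f (set ps)) \<le> nat \<lfloor>eps * real s\<rfloor>"
proof -
  have l: "length ps = s" using assms by (simp add: is_pairing_def)
  have "real (card (cls f (set ps))) < eps * real s"
    using resp_of_card[of eps ps f] assms(2) l by (metis not_le)
  then have "int (card (cls f (set ps))) \<le> \<lfloor>eps * real s\<rfloor>"
    by (simp add: le_floor_iff)
  then show ?thesis by linarith
qed

lemma Zof_sub: "Zof M C \<subseteq> M \<times> M" by (auto simp: Zof_def)

lemma cls_shape: "\<forall>c\<in>cls f S. \<exists>x y. c = {x, y}" by (auto simp: cls_def)

lemma finite_cls: "finite S \<Longrightarrow> finite (cls f S)" by (simp add: cls_def)

lemma bad_sub:
  fixes eps :: real and n m s k :: nat
  defines "D \<equiv> {1..n}" and "M \<equiv> {1..m}"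
  assumes m: "m = m_of n" and s: "s = s_of eps n" and k: "k = m + 2 * nat \<lfloor>eps * real s\<rfloor>"
  shows "((D \<rightarrow>\<^sub>E M) \<times> (D \<rightarrow>\<^sub>E M)) - {pp. event_E eps n pp} \<subseteq>
    (\<Union>S\<in>{S. S \<subseteq> D \<times> D \<and> card S = s \<and> card (pts S) = 2 * s}.
      \<Union>ZR\<in>{Z. Z \<subseteq> M \<times> M \<and> card Z \<le> k}. \<Union>ZB\<in>{Z. Z \<subseteq> M \<times> M \<and> card Z \<le> k}.
        Fset D M S ZR \<times> Fset D M S ZB)"
proof
  fix pp assume pp: "pp \<in> ((D \<rightarrow>\<^sub>E M) \<times> (D \<rightarrow>\<^sub>E M)) - {pp. event_E eps n pp}"
  obtain R B where pp_eq: "pp = (R, B)" by (cases pp)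
  have R: "R \<in> D \<rightarrow>\<^sub>E M" and B: "B \<in> D \<rightarrow>\<^sub>E M" using pp pp_eq by auto
  have "\<not> event_E eps n pp" using pp by simp
  then obtain ps where ps: "is_pairing n s ps" and nR: "\<not> respectful eps R ps" and nB: "\<not> respectful eps B ps"
    unfolding event_E_def s pp_eq by auto
  define S where "S = set ps"
  have S1: "S \<subseteq> D \<times> D" "card S = s" "card (pts S) = 2 * s"
    using pairing_facts[OF ps] by (simp_all add: S_def D_def)
  have ptsD: "pts S \<subseteq> D" using S1(1) by (auto simp: pts_def)
  have finS: "finite S" by (simp add: S_def)
  have cZ: "card (Zof M (cls f S)) \<le> k" if "\<not> respectful eps f ps" for f
  proof -
    have "card (Zof M (cls f S)) \<le> card M + 2 * card (cls f S)"
      by (rule card_Zof) (simp_all add: M_def finite_cls finS cls_shape)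
    also have "\<dots> \<le> m + 2 * nat \<lfloor>eps * real s\<rfloor>"
      using card_cls_le[OF ps that] by (simp add: M_def S_def)
    finally show ?thesis using k by simp
  qed
  have "S \<in> {S. S \<subseteq> D \<times> D \<and> card S = s \<and> card (pts S) = 2 * s}" using S1 by simp
  moreover have "Zof M (cls R S) \<in> {Z. Z \<subseteq> M \<times> M \<and> card Z \<le> k}" using cZ[OF nR] Zof_sub by simp
  moreover have "Zof M (cls B S) \<in> {Z. Z \<subseteq> M \<times> M \<and> card Z \<le> k}" using cZ[OF nB] Zof_sub by simp
  moreover have "pp \<in> Fset D M S (Zof M (cls R S)) \<times> Fset D M S (Zof M (cls B S))"
    using in_Fset[OF R ptsD] in_Fset[OF B ptsD] pp_eq by simp
  ultimately show "pp \<in> (\<Union>S\<in>{S. S \<subseteq> D \<times> D \<and> card S = s \<and> card (pts S) = 2 * s}.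
      \<Union>ZR\<in>{Z. Z \<subseteq> M \<times> M \<and> card Z \<le> k}. \<Union>ZB\<in>{Z. Z \<subseteq> M \<times> M \<and> card Z \<le> k}.
        Fset D M S ZR \<times> Fset D M S ZB)" by blast
qed

lemma alg0:
  fixes a b S X P F c k :: real
  assumes "a > 0" "b > 0" "S > 0"
  shows "X * (F / S) * ((k+1)*c)^2 * (P*a)^2 / ((a*b^2)*(a*b^2)) = (k+1)^2 * c^2 * (F*X*P^2/(S*b^4))"
  using assms by (simp add: field_simps power2_eq_square power4_eq_xxxx)
lemma alg:
  fixes x m s k E :: real
  assumes "x > 0" "m > 0" "s > 0"
  shows "(x^2)^ns * (E ^ ns / s^ns) * ((k+1)*(m^2)^nk)^2 * (k^ns*m^t)^2 / (m^(t+2*ns)*m^(t+2*ns)) = (k+1)^2 * m^(4*nk) * (E*x^2*k^2/(s*m^4))^ns"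
proof -
  have 1: "(E*x^2*k^2/(s*m^4))^ns = E^ns * (x^2)^ns * (k^ns)^2 / (s^ns * (m^ns)^4)"
    by (simp add: power_mult_distrib power_divide power_mult[symmetric] mult.commute)
  have 2: "m^(t+2*ns) = m^t * (m^ns)^2" by (simp add: power_add power_mult[symmetric] mult.commute)
  have 3: "m^(4*nk) = ((m^2)^nk)^2" by (simp add: power_mult[symmetric] mult.commute)
  have p: "m^t > 0" "m^ns > 0" "s^ns > 0" using assms by auto
  show ?thesis unfolding 1 2 3 by (rule alg0[OF p])
qed
lemma main_bound:
  fixes eps :: real and n :: nat
  assumes eps: "0 < eps" "eps < 1/10"
    and h1: "real n \<ge> 2" and h2: "real n / ln (real n)^8 \<ge> 1"
    and h3: "2 * real n / ln (real n)^8 \<le> 0.8 * eps * real n"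
    and h4: "1 + 25.6 * ln (ln (real n)) \<le> ln (real n) / 10"
    and h5: "5 + 4 * (2 * real n / ln (real n)^8) \<le> 0.1 * eps * real n"
  shows "1 - 1 / real n \<le> measure_pmf.prob (two_maps n) {pp. event_E eps n pp}"
proof -
  define x where "x = real n"
  define L where "L = ln x"
  define m where "m = m_of n"
  define s where "s = s_of eps n"
  define k where "k = m + 2 * nat \<lfloor>eps * real s\<rfloor>"
  define D where "D = {1..n}"
  define M where "M = {1..m}"
  define \<Omega> where "\<Omega> = (D \<rightarrow>\<^sub>E M) \<times> (D \<rightarrow>\<^sub>E M)"
  define E where "E = {pp. event_E eps n pp}"
  define SS where "SS = {S. S \<subseteq> D \<times> D \<and> card S = s \<and> card (pts S) = 2 * s}"
  define ZZ where "ZZ = {Z. Z \<subseteq> M \<times> M \<and> card Z \<le> k}"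
  define K where "K = k ^ s * m ^ (n - 2 * s)"
  have x2: "x \<ge> 2" using h1 by (simp add: x_def)
  have Lpos: "L > 0" using x2 by (simp add: L_def)
  have y1: "x / L^8 \<ge> 1" using h2 by (simp add: x_def L_def)
  have mdef: "m = nat \<lceil>x / L^8\<rceil>" by (simp add: m_def m_of_def x_def L_def)
  have mlo: "x / L^8 \<le> real m" unfolding mdef by linarith
  have mhi: "real m \<le> 2 * x / L^8"
  proof -
    have "real m \<le> x / L^8 + 1" unfolding mdef using y1 by linarith
    then show ?thesis using y1 by simp
  qed
  have m1: "m \<ge> 1" using mlo y1 by linarith
  have x500: "x \<ge> 500"
  proof -
    have hb: "5 + 4 * (2 * x / L^8) \<le> 0.1 * eps * x" using h5 by (simp add: x_def L_def)
    have "0 \<le> 2 * x / L^8" using x2 Lpos by simp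
    then have "5 \<le> 0.1 * eps * x" using hb by linarith
    moreover have "0.1 * eps * x \<le> (1/100) * x" using eps x2 by (intro mult_right_mono) auto
    ultimately show ?thesis by linarith
  qed
  have sdef: "s = nat \<lceil>eps * x\<rceil>" by (simp add: s_def s_of_def x_def)
  have epsx: "eps * x \<ge> 0" using eps x2 by simp
  have slo: "eps * x \<le> real s" unfolding sdef by linarith
  have shi: "real s \<le> eps * x + 1" unfolding sdef using epsx by linarith
  have epsx2: "eps * x \<le> 0.1 * x" using eps x2 by (intro mult_right_mono) auto
  have sx: "real s \<le> x" using shi epsx2 x500 by linarith
  have two_s: "2 * s \<le> n"
  proof -
    have "2 * real s \<le> x" using shi epsx2 x500 by linarith
    then have "real (2 * s) \<le> real n" by (simp add: x_def)
    then show ?thesis by linarith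
  qed
  have kle: "real k \<le> real m + 2 * eps * real s"
  proof -
    have "eps * real s \<ge> 0" using eps by simp
    then have "real (nat \<lfloor>eps * real s\<rfloor>) \<le> eps * real s" by linarith
    then show ?thesis by (simp add: k_def)
  qed
  have k1: "k \<ge> 1" using m1 by (simp add: k_def)
  have hmk: "real m \<le> 0.8 * eps * x" using mhi h3 by (simp add: x_def L_def)
  have hL: "1 + 25.6 * ln L \<le> L / 10" using h4 by (simp add: x_def L_def)
  have hbig: "5 + 4 * (2 * x / L^8) \<le> 0.1 * eps * x" using h5 by (simp add: x_def L_def)
  have B2: "(real k + 1)^2 * real m ^ (4*k) * (exp 1 * x^2 * real k^2 / (real s * real m^4)) ^ s \<le> 1 / x"
    by (rule det_bound[OF eps x2 L_def mlo mhi m1 slo sx kle k1 hmk hL hbig])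
  have finD: "finite D" and finM: "finite M" by (simp_all add: D_def M_def)
  have cD: "card D = n" and cM: "card M = m" by (simp_all add: D_def M_def)
  have Mne: "M \<noteq> {}" using m1 by (auto simp: M_def)
  have fin\<Omega>: "finite \<Omega>" unfolding \<Omega>_def using finD finM by (auto intro!: finite_PiE)
  have c\<Omega>: "card \<Omega> = m ^ n * m ^ n"
    unfolding \<Omega>_def using finD by (simp add: card_cartesian_product card_PiE cD cM)
  have \<Omega>ne: "\<Omega> \<noteq> {}" unfolding \<Omega>_def using Mne by (simp add: PiE_eq_empty_iff)
  have prob: "measure_pmf.prob (two_maps n) E = real (card (\<Omega> \<inter> E)) / real (card \<Omega>)"
    unfolding two_maps_def using fin\<Omega> \<Omega>ne by (simp add: measure_pmf_of_set \<Omega>_def D_def M_def m_def)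
  have cpos: "card \<Omega> > 0" using fin\<Omega> \<Omega>ne by (simp add: card_gt_0_iff)
  have split: "real (card (\<Omega> \<inter> E)) = real (card \<Omega>) - real (card (\<Omega> - E))"
  proof -
    have "card \<Omega> = card (\<Omega> \<inter> E) + card (\<Omega> - E)"
      using fin\<Omega> by (metis card_Int_Diff)
    then show ?thesis by simp
  qed
  have finSS: "finite SS" unfolding SS_def
    by (rule finite_subset[of _ "Pow (D \<times> D)"]) (auto simp: finD)
  have finZZ: "finite ZZ" unfolding ZZ_def
    by (rule finite_subset[of _ "Pow (M \<times> M)"]) (auto simp: finM)
  have cF: "card (Fset D M S Z) \<le> K" if S: "S \<in> SS" and Z: "Z \<in> ZZ" for S Z
  proof -
    have Ssub: "S \<subseteq> D \<times> D" and cS: "card S = s" and cpS: "card (pts S) = 2 * s" using S by (auto simp: SS_def)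
    have ptsD: "pts S \<subseteq> D" using Ssub by (auto simp: pts_def)
    have finS: "finite S" using Ssub finD by (meson finite_SigmaI finite_subset)
    have Zsub: "Z \<subseteq> M \<times> M" using Z by (simp add: ZZ_def)
    have finZ: "finite Z" using Zsub finM by (meson finite_SigmaI finite_subset)
    have cZ: "card Z \<le> k" using Z by (simp add: ZZ_def)
    have "card (Fset D M S Z) \<le> card Z ^ card S * card M ^ card (D - pts S)"
      by (rule card_Fset[OF finD finM finS finZ ptsD])
    also have "card (D - pts S) = n - 2 * s"
    proof -
      have "finite (pts S)" using ptsD finD by (rule finite_subset)
      then show ?thesis using ptsD cpS cD by (simp add: card_Diff_subset)
    qed
    also have "card Z ^ card S * card M ^ (n - 2 * s) \<le> K"
      unfolding K_def cS cM using cZ by (simp add: power_mono)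
    finally show ?thesis .
  qed
  have cbad: "card (\<Omega> - E) \<le> card SS * (card ZZ * (card ZZ * (K * K)))"
  proof -
    have sub: "\<Omega> - E \<subseteq> (\<Union>S\<in>SS. \<Union>ZR\<in>ZZ. \<Union>ZB\<in>ZZ. Fset D M S ZR \<times> Fset D M S ZB)"
      unfolding \<Omega>_def E_def SS_def ZZ_def D_def M_def
      by (rule bad_sub[OF m_def s_def k_def])
    have finU: "finite (\<Union>S\<in>SS. \<Union>ZR\<in>ZZ. \<Union>ZB\<in>ZZ. Fset D M S ZR \<times> Fset D M S ZB)"
    proof -
      have "Fset D M S ZR \<times> Fset D M S ZB \<subseteq> \<Omega>" for S ZR ZB
        by (auto simp: Fset_def \<Omega>_def)
      then have "(\<Union>S\<in>SS. \<Union>ZR\<in>ZZ. \<Union>ZB\<in>ZZ. Fset D M S ZR \<times> Fset D M S ZB) \<subseteq> \<Omega>" by blast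
      then show ?thesis using fin\<Omega> by (rule finite_subset)
    qed
    have "card (\<Omega> - E) \<le> card (\<Union>S\<in>SS. \<Union>ZR\<in>ZZ. \<Union>ZB\<in>ZZ. Fset D M S ZR \<times> Fset D M S ZB)"
      by (rule card_mono[OF finU sub])
    also have "\<dots> \<le> card SS * (card ZZ * (card ZZ * (K * K)))"
    proof (rule card_UN_bound[OF finSS])
      fix S assume S: "S \<in> SS"
      show "card (\<Union>ZR\<in>ZZ. \<Union>ZB\<in>ZZ. Fset D M S ZR \<times> Fset D M S ZB) \<le> card ZZ * (card ZZ * (K * K))"
      proof (rule card_UN_bound[OF finZZ])
        fix ZR assume ZR: "ZR \<in> ZZ"
        show "card (\<Union>ZB\<in>ZZ. Fset D M S ZR \<times> Fset D M S ZB) \<le> card ZZ * (K * K)"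
        proof (rule card_UN_bound[OF finZZ])
          fix ZB assume ZB: "ZB \<in> ZZ"
          show "card (Fset D M S ZR \<times> Fset D M S ZB) \<le> K * K"
            unfolding card_cartesian_product using cF[OF S ZR] cF[OF S ZB] by (rule mult_le_mono)
        qed
      qed
    qed
    finally show ?thesis .
  qed
  have spos: "real s > 0" using slo eps x2 by (smt (verit) mult_pos_pos)
  have mpos: "real m > 0" using m1 by simp
  have xpos: "x > 0" using x2 by simp
  have cSS: "real (card SS) \<le> (x^2)^s * (exp 1 ^ s / real s ^ s)"
  proof -
    have "real (card SS) \<le> real (card (D \<times> D)) ^ s / fact s"
      unfolding SS_def by (rule card_Sfam) (simp add: finD)
    also have "real (card (D \<times> D)) = x^2" by (simp add: card_cartesian_product cD x_def power2_eq_square)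
    also have "(x^2)^s / fact s \<le> (x^2)^s * (exp 1 ^ s / real s ^ s)"
    proof -
      have "real s ^ s / fact s \<le> exp (real s)" by (rule pow_div_fact_le_exp) simp
      also have "exp (real s) = exp 1 ^ s" by (metis exp_of_nat_mult mult.right_neutral)
      finally have "real s ^ s / fact s \<le> exp 1 ^ s" .
      then have "1 / fact s \<le> exp 1 ^ s / real s ^ s" using spos by (simp add: field_simps)
      then have "(x^2)^s * (1 / fact s) \<le> (x^2)^s * (exp 1 ^ s / real s ^ s)"
        by (intro mult_left_mono) auto
      then show ?thesis by simp
    qed
    finally show ?thesis .
  qed
  have cZZ: "real (card ZZ) \<le> (real k + 1) * (real m ^ 2) ^ k"
  proof -
    have "card ZZ \<le> (k + 1) * card (M \<times> M) ^ k"
      unfolding ZZ_def using m1 by (intro card_Zfam) (simp_all add: finM card_cartesian_product cM)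
    then have "real (card ZZ) \<le> real ((k + 1) * card (M \<times> M) ^ k)" by linarith
    then show ?thesis by (simp add: card_cartesian_product cM power2_eq_square algebra_simps)
  qed
  have cK: "real K = real k ^ s * real m ^ (n - 2 * s)" by (simp add: K_def)
  have bad_real: "real (card (\<Omega> - E)) \<le> (x^2)^s * (exp 1 ^ s / real s ^ s) * ((real k + 1) * (real m ^ 2) ^ k)^2 * (real k ^ s * real m ^ (n - 2 * s))^2"
  proof -
    have "real (card (\<Omega> - E)) \<le> real (card SS) * (real (card ZZ) * (real (card ZZ) * (real K * real K)))"
      using cbad by (metis of_nat_le_iff of_nat_mult)
    also have "\<dots> = real (card SS) * real (card ZZ)^2 * real K^2" by (simp add: power2_eq_square)
    also have "\<dots> \<le> (x^2)^s * (exp 1 ^ s / real s ^ s) * ((real k + 1) * (real m ^ 2) ^ k)^2 * real K^2"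
      using cSS cZZ by (intro mult_right_mono mult_mono power_mono) auto
    finally show ?thesis unfolding cK .
  qed
  have nsplit: "n = (n - 2 * s) + 2 * s" using two_s by simp
  have c\<Omega>r: "real (card \<Omega>) = real m ^ ((n - 2 * s) + 2 * s) * real m ^ ((n - 2 * s) + 2 * s)"
    using c\<Omega> nsplit by (metis of_nat_mult of_nat_power)
  have "real (card (\<Omega> - E)) / real (card \<Omega>) \<le> 
      (x^2)^s * (exp 1 ^ s / real s ^ s) * ((real k + 1) * (real m ^ 2) ^ k)^2 * (real k ^ s * real m ^ (n - 2 * s))^2
      / (real m ^ ((n - 2 * s) + 2 * s) * real m ^ ((n - 2 * s) + 2 * s))"
    unfolding c\<Omega>r[symmetric] using bad_real cpos by (intro divide_right_mono) auto
  also have "\<dots> = (real k + 1)^2 * real m ^ (4*k) * (exp 1 * x^2 * real k^2 / (real s * real m^4)) ^ s"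
    by (rule alg[OF xpos mpos spos])
  also have "\<dots> \<le> 1 / x" by (rule B2)
  finally have r: "real (card (\<Omega> - E)) / real (card \<Omega>) \<le> 1 / x" .
  have "measure_pmf.prob (two_maps n) E = 1 - real (card (\<Omega> - E)) / real (card \<Omega>)"
    unfolding prob split using cpos by (simp add: field_simps)
  then show ?thesis using r by (simp add: E_def x_def)
qed


lemma ev_ge: "filterlim f at_top F \<Longrightarrow> eventually (\<lambda>n. (c::real) \<le> f n) F"
  by (simp add: filterlim_at_top)

lemma asym_facts:
  fixes eps :: real
  assumes eps: "0 < eps"
  shows "eventually (\<lambda>n. real n \<ge> 2 \<and> real n / ln (real n)^8 \<ge> 1 \<and>
      2 * real n / ln (real n)^8 \<le> 0.8 * eps * real n \<and>
      1 + 25.6 * ln (ln (real n)) \<le> ln (real n) / 10 \<and>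
      5 + 4 * (2 * real n / ln (real n)^8) \<le> 0.1 * eps * real n) sequentially"
proof -
  have f1: "filterlim (\<lambda>n::nat. real n) at_top sequentially" by real_asymp
  have f2: "filterlim (\<lambda>n::nat. real n / ln (real n)^8) at_top sequentially" by real_asymp
  have f3: "filterlim (\<lambda>n::nat. ln (real n)^8) at_top sequentially" by real_asymp
  have f4: "filterlim (\<lambda>n::nat. ln (real n) / 10 - 25.6 * ln (ln (real n))) at_top sequentially" by real_asymp
  have e1: "eventually (\<lambda>n. 250 / eps \<le> real n) sequentially" by (rule ev_ge[OF f1])
  have e1': "eventually (\<lambda>n. 2 \<le> real n) sequentially" by (rule ev_ge[OF f1])
  have e2: "eventually (\<lambda>n. 1 \<le> real n / ln (real n)^8) sequentially" by (rule ev_ge[OF f2])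
  have e3: "eventually (\<lambda>n. 100 / eps \<le> ln (real n)^8) sequentially" by (rule ev_ge[OF f3])
  have e4: "eventually (\<lambda>n. 1 \<le> ln (real n) / 10 - 25.6 * ln (ln (real n))) sequentially" by (rule ev_ge[OF f4])
  show ?thesis
  proof (rule eventually_mono[OF eventually_conj[OF e1 eventually_conj[OF e1' eventually_conj[OF e2 eventually_conj[OF e3 e4]]]]])
    fix n :: nat
    assume h: "250 / eps \<le> real n \<and> 2 \<le> real n \<and> 1 \<le> real n / ln (real n)^8 \<and>
       100 / eps \<le> ln (real n)^8 \<and> 1 \<le> ln (real n) / 10 - 25.6 * ln (ln (real n))"
    define x where "x = real n"
    define P where "P = ln (real n)^8"
    have xpos: "x > 0" using h by (simp add: x_def)
    have Ppos: "P > 0" using h eps unfolding P_def by (smt (verit) divide_pos_pos)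
    have a: "2 * x / P \<le> eps / 50 * x"
    proof -
      have "2 / P \<le> eps / 50" using h Ppos eps unfolding P_def[symmetric]
        by (simp add: field_simps)
      then have "(2 / P) * x \<le> (eps / 50) * x" using xpos by (intro mult_right_mono) auto
      then show ?thesis by simp
    qed
    have b: "eps / 50 * x \<le> 0.8 * eps * x" using eps xpos by (intro mult_right_mono) auto
    have c: "5 \<le> 0.02 * eps * x"
    proof -
      have "250 / eps * eps \<le> x * eps" using h eps unfolding x_def[symmetric] by (intro mult_right_mono) auto
      then show ?thesis using eps by (simp add: mult.commute)
    qed
    have d: "5 + 4 * (2 * x / P) \<le> 0.1 * eps * x" using a c by simp
    show "real n \<ge> 2 \<and> real n / ln (real n)^8 \<ge> 1 \<and>
      2 * real n / ln (real n)^8 \<le> 0.8 * eps * real n \<and>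
      1 + 25.6 * ln (ln (real n)) \<le> ln (real n) / 10 \<and>
      5 + 4 * (2 * real n / ln (real n)^8) \<le> 0.1 * eps * real n"
      using h a b d unfolding x_def P_def by (intro conjI; linarith)
  qed
qed


theorem lemma4p2:
  fixes eps :: real
  assumes "0 < eps" and "eps < 1/10"
  shows "(\<lambda>n. measure_pmf.prob (two_maps n) {pp. event_E eps n pp}) \<longlonglongrightarrow> 1"
proof -
  have ev: "eventually (\<lambda>n. 1 - 1 / real n \<le> measure_pmf.prob (two_maps n) {pp. event_E eps n pp}) sequentially"
  proof (rule eventually_mono[OF asym_facts[OF assms(1)]])
    fix n :: nat
    assume h: "real n \<ge> 2 \<and> real n / ln (real n)^8 \<ge> 1 \<and>
      2 * real n / ln (real n)^8 \<le> 0.8 * eps * real n \<and>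
      1 + 25.6 * ln (ln (real n)) \<le> ln (real n) / 10 \<and>
      5 + 4 * (2 * real n / ln (real n)^8) \<le> 0.1 * eps * real n"
    show "1 - 1 / real n \<le> measure_pmf.prob (two_maps n) {pp. event_E eps n pp}"
      using h by (intro main_bound[OF assms]) auto
  qed
  have ev2: "eventually (\<lambda>n. measure_pmf.prob (two_maps n) {pp. event_E eps n pp} \<le> 1) sequentially"
    by (simp add: measure_pmf.prob_le_1)
  have lim: "(\<lambda>n. 1 - 1 / real n) \<longlonglongrightarrow> 1"
    using tendsto_diff[OF tendsto_const lim_1_over_n, of 1] by simp
  show ?thesis by (rule tendsto_sandwich[OF ev ev2 lim tendsto_const])
qed

end
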